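(* Let $\alpha_1\ge\alpha_2\ge\dots>0$ with $\sum_n\alpha_n<\infty$, set $R_n=\sum_{i=n+1}^\infty\alpha_i$ for $n\ge0$, and assume $\alpha_n>R_n$ for every $n\ge1$. Let $\rho$ be the law of $\sum_{j=1}^\infty\varepsilon_j\alpha_j$, where $(\varepsilon_j)$ are i.i.d. with $\mathbb P[\varepsilon_j=1]=\mathbb P[\varepsilon_j=-1]=\frac12$ (equivalently, the infinite convolution of the measures $\frac12(\delta_{\alpha_n}+\delta_{-\alpha_n})$). Then for every integer $n\ge0$: (i) if $I$ is an interval of length $|I|<R_n$, then $\rho(I)\le2^{-n}$; (ii) if $\delta>0$ and $R_n<\frac\delta4$, then $\rho((\lambda-\delta,\lambda+\delta))\ge2^{-n}$ for every $\lambda$ in the support of $\rho$. *)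

theory Defs
  imports "HOL-Probability.Probability"
begin

text \<open>Probability space of i.i.d. signs eps_1, eps_2, ... (coordinate 0 is unused),
  each uniform on {-1, 1}.\<close>
definition sign_space :: "(nat \<Rightarrow> real) measure" where
  "sign_space = (\<Pi>\<^sub>M j\<in>(UNIV::nat set). measure_pmf (pmf_of_set {-1::real, 1}))"

definition sign_series_law :: "(nat \<Rightarrow> real) \<Rightarrow> real measure" where
  "sign_series_law \<alpha> = distr sign_space borel (\<lambda>\<epsilon>. \<Sum>j. \<epsilon> (Suc j) * \<alpha> (Suc j))"

definition tail_sum :: "(nat \<Rightarrow> real) \<Rightarrow> nat \<Rightarrow> real" where
  "tail_sum \<alpha> n = (\<Sum>i. \<alpha> (n + 1 + i))"

definition measure_support :: "'a::topological_space measure \<Rightarrow> 'a set" where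
  "measure_support M = {x. \<forall>U. open U \<and> x \<in> U \<longrightarrow> emeasure M U > 0}"

end

theory Submission
  imports Defs
begin


abbreviation "SP \<equiv> measure_pmf (pmf_of_set {-1::real, 1})"

lemma ps: "prob_space sign_space"
  unfolding sign_space_def by (intro prob_space_PiM prob_space_measure_pmf)

lemma space_ss: "space sign_space = UNIV"
  unfolding sign_space_def by (simp add: space_PiM)

lemma cyl_emeasure:
  assumes "\<forall>j. e j \<in> {-1,1::real}"
  shows "emeasure sign_space {x. \<forall>j\<in>{1..m}. x j = e j} = ennreal ((1/2)^m)"
proof -
  have eq: "{x. \<forall>j\<in>{1..m}. x j = e j} = prod_emb UNIV (\<lambda>_. SP) {1..m} (PiE {1..m} (\<lambda>j. {e j}))"
    by (auto simp: prod_emb_def PiE_iff space_PiM restrict_def)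
  have "emeasure sign_space {x. \<forall>j\<in>{1..m}. x j = e j} = (\<Prod>j\<in>{1..m}. emeasure SP {e j})"
    unfolding eq sign_space_def
    by (rule emeasure_PiM_emb) (auto intro: prob_space_measure_pmf)
  also have "\<dots> = (\<Prod>j\<in>{1..m}. ennreal (1/2))"
  proof (rule prod.cong)
    fix j assume "j \<in> {1..m}"
    have "e j \<in> {-1,1}" using assms by auto
    then show "emeasure SP {e j} = ennreal (1/2)"
      by (subst emeasure_pmf_single) (auto simp: pmf_of_set)
  qed simp
  also have "\<dots> = ennreal ((1/2)^m)" by (subst prod_constant, subst ennreal_power) auto
  finally show ?thesis .
qed

lemma AE_valid: "AE x in sign_space. \<forall>j. x j \<in> {-1,1::real}"
proof (subst AE_all_countable, intro allI)
  fix j :: nat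
  have eq: "{x. x j \<notin> {-1,1::real}} = prod_emb UNIV (\<lambda>_. SP) {j} (PiE {j} (\<lambda>j. - {-1,1}))"
    by (auto simp: prod_emb_def PiE_iff space_PiM restrict_def extensional_def)
  have "emeasure sign_space {x. x j \<notin> {-1,1::real}} = (\<Prod>i\<in>{j}. emeasure SP (- {-1,1}))"
    unfolding eq sign_space_def
    by (rule emeasure_PiM_emb) (auto intro: prob_space_measure_pmf)
  also have "\<dots> = 0"
    by (simp add: measure_pmf.emeasure_eq_measure measure_pmf_zero_iff)
  finally have "{x. x j \<notin> {-1,1::real}} \<in> null_sets sign_space"
    using eq by (auto simp: null_sets_def sign_space_def) 
  then show "AE x in sign_space. x j \<in> {-1,1::real}"
    by (intro AE_I'[of "{x. x j \<notin> {-1,1::real}}"]) (auto simp: space_ss)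
qed

lemma S_meas: "(\<lambda>\<epsilon>. \<Sum>j. \<epsilon> (Suc j) * \<alpha> (Suc j)) \<in> borel_measurable sign_space"
  unfolding sign_space_def
  by (intro borel_measurable_suminf borel_measurable_times borel_measurable_const
      measurable_compose[OF measurable_component_singleton]) auto



definition valid :: "(nat \<Rightarrow> real) \<Rightarrow> bool" where
  "valid e \<longleftrightarrow> (\<forall>j. e j \<in> {-1,1})"
definition Ssum :: "(nat \<Rightarrow> real) \<Rightarrow> (nat \<Rightarrow> real) \<Rightarrow> real" where
  "Ssum \<alpha> e = (\<Sum>j. e (Suc j) * \<alpha> (Suc j))"
definition Psum :: "(nat \<Rightarrow> real) \<Rightarrow> nat \<Rightarrow> (nat \<Rightarrow> real) \<Rightarrow> real" where
  "Psum \<alpha> n e = (\<Sum>j<n. e (Suc j) * \<alpha> (Suc j))"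
definition Tsum :: "(nat \<Rightarrow> real) \<Rightarrow> nat \<Rightarrow> (nat \<Rightarrow> real) \<Rightarrow> real" where
  "Tsum \<alpha> n e = (\<Sum>i. e (n + 1 + i) * \<alpha> (n + 1 + i))"

locale seqA =
  fixes \<alpha> :: "nat \<Rightarrow> real"
  assumes pos: "\<And>k. k \<ge> 1 \<Longrightarrow> \<alpha> k > 0"
    and summ: "summable (\<lambda>k. \<alpha> (Suc k))"
    and dom: "\<And>k. k \<ge> 1 \<Longrightarrow> \<alpha> k > tail_sum \<alpha> k"
begin

lemma summ_tail: "summable (\<lambda>i. \<alpha> (n + 1 + i))"
  using summable_ignore_initial_segment[OF summ, of n] by (simp add: add.commute)

lemma tail_split: "tail_sum \<alpha> n = \<alpha> (Suc n) + tail_sum \<alpha> (Suc n)"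
  using suminf_split_head[OF summ_tail[of n]] unfolding tail_sum_def by simp

lemma tail_nonneg: "0 \<le> tail_sum \<alpha> n"
  unfolding tail_sum_def by (intro suminf_nonneg summ_tail) (simp add: less_imp_le pos)

lemma abs_e: "valid e \<Longrightarrow> k \<ge> 1 \<Longrightarrow> \<bar>e k * \<alpha> k\<bar> = \<alpha> k"
proof -
  assume "valid e" "k \<ge> 1"
  then have "e k = -1 \<or> e k = 1" "\<alpha> k > 0" using pos[of k] unfolding valid_def by auto
  then show ?thesis by (auto simp: abs_mult)
qed

lemma summ_e: "valid e \<Longrightarrow> summable (\<lambda>j. e (Suc j) * \<alpha> (Suc j))"
  by (rule summable_comparison_test'[OF summ, of 0]) (simp add: abs_e)

lemma summ_Te: "valid e \<Longrightarrow> summable (\<lambda>i. e (n + 1 + i) * \<alpha> (n + 1 + i))"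
  by (rule summable_comparison_test'[OF summ_tail[of n], of 0]) (simp add: abs_e)

lemma S_split: "valid e \<Longrightarrow> Ssum \<alpha> e = Psum \<alpha> n e + Tsum \<alpha> n e"
  using suminf_split_initial_segment[OF summ_e, of e n]
  unfolding Ssum_def Psum_def Tsum_def by (simp add: add.commute add.left_commute)

lemma T_bound: "valid e \<Longrightarrow> \<bar>Tsum \<alpha> n e\<bar> \<le> tail_sum \<alpha> n"
proof -
  assume v: "valid e"
  have "summable (\<lambda>i. norm (e (n + 1 + i) * \<alpha> (n + 1 + i)))"
    using summ_tail[of n] by (simp add: abs_e v)
  from summable_norm[OF this] show ?thesis
    unfolding Tsum_def tail_sum_def by (simp add: abs_e v)
qed

lemma T_split: "valid e \<Longrightarrow> Tsum \<alpha> n e = e (Suc n) * \<alpha> (Suc n) + Tsum \<alpha> (Suc n) e"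
  using suminf_split_head[OF summ_Te[of e n]] unfolding Tsum_def by simp

lemma T_pos: "valid e \<Longrightarrow> e (Suc n) = 1 \<Longrightarrow> Tsum \<alpha> n e > 0"
  using T_split[of e n] T_bound[of e "Suc n"] dom[of "Suc n"] by auto

lemma T_neg: "valid e \<Longrightarrow> e (Suc n) = -1 \<Longrightarrow> Tsum \<alpha> n e < 0"
  using T_split[of e n] T_bound[of e "Suc n"] dom[of "Suc n"] by auto

lemma P_Suc: "Psum \<alpha> (Suc n) e = Psum \<alpha> n e + e (Suc n) * \<alpha> (Suc n)"
  unfolding Psum_def by simp

lemma P_sep: "valid e \<Longrightarrow> valid e' \<Longrightarrow> \<exists>j\<in>{1..n}. e j \<noteq> e' j \<Longrightarrow>
   \<bar>Psum \<alpha> n e - Psum \<alpha> n e'\<bar> > 2 * tail_sum \<alpha> n"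
proof (induction n)
  case 0 then show ?case by simp
next
  case (Suc n)
  have ts: "tail_sum \<alpha> n = \<alpha> (Suc n) + tail_sum \<alpha> (Suc n)" by (rule tail_split)
  have ap: "\<alpha> (Suc n) > 0" using pos by simp
  have ee: "e (Suc n) \<in> {-1,1}" "e' (Suc n) \<in> {-1,1}" using Suc.prems unfolding valid_def by auto
  show ?case
  proof (cases "\<exists>j\<in>{1..n}. e j \<noteq> e' j")
    case True
    with Suc have ih: "\<bar>Psum \<alpha> n e - Psum \<alpha> n e'\<bar> > 2 * tail_sum \<alpha> n" by blast
    show ?thesis using ih ee ap unfolding P_Suc ts by auto
  next
    case False
    then have "e (Suc n) \<noteq> e' (Suc n)" using Suc.prems(3)
      by (metis atLeastAtMost_iff le_Suc_eq)
    moreover have "Psum \<alpha> n e = Psum \<alpha> n e'"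
      unfolding Psum_def using False by (intro sum.cong) auto
    moreover have "\<alpha> (Suc n) > tail_sum \<alpha> (Suc n)" using dom by simp
    ultimately show ?thesis using ee ap unfolding P_Suc by auto
  qed
qed

lemma key_A:
  assumes "valid e" "valid e'" "\<bar>Ssum \<alpha> e - Ssum \<alpha> e'\<bar> < tail_sum \<alpha> n"
    "Psum \<alpha> n e > Psum \<alpha> n e' + 2 * tail_sum \<alpha> n"
  shows "e (Suc n) = -1 \<and> e' (Suc n) = 1"
proof -
  have "Tsum \<alpha> n e < 0" "Tsum \<alpha> n e' > 0"
    using assms S_split[of e n] S_split[of e' n] T_bound[of e n] T_bound[of e' n] by auto
  then show ?thesis using T_pos[of e n] T_neg[of e' n] assms(1,2) unfolding valid_def
    by (metis insert_iff singletonD less_asym)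
qed

lemma P_cong: "\<forall>j\<in>{1..n}. e j = e' j \<Longrightarrow> Psum \<alpha> n e = Psum \<alpha> n e'"
  unfolding Psum_def by (intro sum.cong) auto

lemma agree_Suc: "\<forall>j\<in>{1..n}. e j = e' j \<Longrightarrow> e (Suc n) = e' (Suc n) \<Longrightarrow> \<forall>j\<in>{1..Suc n}. e j = e' j"
  by (metis atLeastAtMost_iff le_Suc_eq)

lemma cover_ord:
  assumes hI: "\<forall>x\<in>I. \<forall>y\<in>I. \<bar>x - y\<bar> < tail_sum \<alpha> n"
    and v1: "valid e1" and v2: "valid e2" and i1: "Ssum \<alpha> e1 \<in> I" and i2: "Ssum \<alpha> e2 \<in> I"
    and gt: "Psum \<alpha> n e1 > Psum \<alpha> n e2 + 2 * tail_sum \<alpha> n"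
  shows "\<forall>e. valid e \<and> Ssum \<alpha> e \<in> I \<longrightarrow> (\<forall>j\<in>{1..Suc n}. e j = e1 j) \<or> (\<forall>j\<in>{1..Suc n}. e j = e2 j)"
proof (intro allI impI)
  fix e assume "valid e \<and> Ssum \<alpha> e \<in> I"
  then have v: "valid e" and i: "Ssum \<alpha> e \<in> I" by auto
  have k12: "e1 (Suc n) = -1 \<and> e2 (Suc n) = 1"
    using key_A[OF v1 v2 _ gt] hI i1 i2 by blast
  show "(\<forall>j\<in>{1..Suc n}. e j = e1 j) \<or> (\<forall>j\<in>{1..Suc n}. e j = e2 j)"
  proof (cases "\<forall>j\<in>{1..n}. e j = e1 j")
    case True
    then have "Psum \<alpha> n e = Psum \<alpha> n e1" by (rule P_cong)
    then have "e (Suc n) = -1" using key_A[OF v v2] hI i i2 gt by auto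
    then have "e (Suc n) = e1 (Suc n)" using k12 by simp
    then show ?thesis using agree_Suc[OF True] by blast
  next
    case F1: False
    show ?thesis
    proof (cases "\<forall>j\<in>{1..n}. e j = e2 j")
      case True
      then have "Psum \<alpha> n e = Psum \<alpha> n e2" by (rule P_cong)
      then have "e (Suc n) = 1" using key_A[OF v1 v] hI i i1 gt by auto
      then have "e (Suc n) = e2 (Suc n)" using k12 by simp
      then show ?thesis using agree_Suc[OF True] by blast
    next
      case F2: False
      have s1: "\<bar>Psum \<alpha> n e - Psum \<alpha> n e1\<bar> > 2 * tail_sum \<alpha> n"
        using P_sep[OF v v1] F1 by auto
      have s2: "\<bar>Psum \<alpha> n e - Psum \<alpha> n e2\<bar> > 2 * tail_sum \<alpha> n"
        using P_sep[OF v v2] F2 by auto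
      have a: "e (Suc n) = 1"
      proof (cases "Psum \<alpha> n e > Psum \<alpha> n e1 + 2 * tail_sum \<alpha> n")
        case True
        then have "e1 (Suc n) = 1" using key_A[OF v v1] hI i i1 by auto
        then show ?thesis using k12 by simp
      next
        case False
        then have "Psum \<alpha> n e1 > Psum \<alpha> n e + 2 * tail_sum \<alpha> n" using s1 by auto
        then show ?thesis using key_A[OF v1 v] hI i i1 by auto
      qed
      have b: "e (Suc n) = -1"
      proof (cases "Psum \<alpha> n e2 > Psum \<alpha> n e + 2 * tail_sum \<alpha> n")
        case True
        then have "e2 (Suc n) = -1" using key_A[OF v2 v] hI i i2 by auto
        then show ?thesis using k12 by simp
      next
        case False
        then have "Psum \<alpha> n e > Psum \<alpha> n e2 + 2 * tail_sum \<alpha> n" using s2 by auto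
        then show ?thesis using key_A[OF v v2] hI i i2 by auto
      qed
      from a b show ?thesis by simp
    qed
  qed
qed

lemma cover:
  assumes hI: "\<forall>x\<in>I. \<forall>y\<in>I. \<bar>x - y\<bar> < tail_sum \<alpha> n"
  shows "(\<exists>e0. valid e0 \<and> (\<forall>e. valid e \<and> Ssum \<alpha> e \<in> I \<longrightarrow> (\<forall>j\<in>{1..n}. e j = e0 j))) \<or>
    (\<exists>e1 e2. valid e1 \<and> valid e2 \<and> (\<forall>e. valid e \<and> Ssum \<alpha> e \<in> I \<longrightarrow>
        (\<forall>j\<in>{1..Suc n}. e j = e1 j) \<or> (\<forall>j\<in>{1..Suc n}. e j = e2 j)))"
proof (cases "\<exists>e1 e2. valid e1 \<and> valid e2 \<and> Ssum \<alpha> e1 \<in> I \<and> Ssum \<alpha> e2 \<in> I \<and> (\<exists>j\<in>{1..n}. e1 j \<noteq> e2 j)")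
  case True
  then obtain e1 e2 where h: "valid e1" "valid e2" "Ssum \<alpha> e1 \<in> I" "Ssum \<alpha> e2 \<in> I"
     "\<exists>j\<in>{1..n}. e1 j \<noteq> e2 j" by blast
  have "\<bar>Psum \<alpha> n e1 - Psum \<alpha> n e2\<bar> > 2 * tail_sum \<alpha> n" using P_sep[OF h(1,2,5)] .
  then have "Psum \<alpha> n e1 > Psum \<alpha> n e2 + 2 * tail_sum \<alpha> n \<or> Psum \<alpha> n e2 > Psum \<alpha> n e1 + 2 * tail_sum \<alpha> n"
    by auto
  then show ?thesis
  proof
    assume "Psum \<alpha> n e1 > Psum \<alpha> n e2 + 2 * tail_sum \<alpha> n"
    from cover_ord[OF hI h(1-4) this] h show ?thesis by blast
  next
    assume "Psum \<alpha> n e2 > Psum \<alpha> n e1 + 2 * tail_sum \<alpha> n"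
    from cover_ord[OF hI h(2,1,4,3) this] h show ?thesis by blast
  qed
next
  case False
  show ?thesis
  proof (cases "\<exists>e0. valid e0 \<and> Ssum \<alpha> e0 \<in> I")
    case True
    then obtain e0 where "valid e0" "Ssum \<alpha> e0 \<in> I" by blast
    then show ?thesis using False by blast
  next
    case F2: False
    have "valid (\<lambda>_. 1)" by (simp add: valid_def)
    then show ?thesis using F2 by blast
  qed
qed

lemma close_S:
  assumes "valid e" "valid e0" "\<forall>j\<in>{1..n}. e j = e0 j"
  shows "\<bar>Ssum \<alpha> e - Ssum \<alpha> e0\<bar> \<le> 2 * tail_sum \<alpha> n"
  using S_split[OF assms(1), of n] S_split[OF assms(2), of n] P_cong[OF assms(3)]
    T_bound[OF assms(1), of n] T_bound[OF assms(2), of n] by auto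

end

lemma emeas_to_meas: "emeasure sign_space A \<le> ennreal c \<Longrightarrow> 0 \<le> c \<Longrightarrow> measure sign_space A \<le> c"
proof -
  interpret prob_space sign_space by (rule ps)
  assume "emeasure sign_space A \<le> ennreal c" "0 \<le> c"
  then show ?thesis by (simp add: emeasure_eq_measure)
qed

lemma cyl_sets: "{x. \<forall>j\<in>{1..m}. x j = e j} \<in> sets sign_space"
proof -
  have eq: "{x. \<forall>j\<in>{1..m}. x j = e j} = prod_emb UNIV (\<lambda>_. SP) {1..m} (PiE {1..m} (\<lambda>j. {e j}))"
    by (auto simp: prod_emb_def PiE_iff space_PiM restrict_def)
  show ?thesis unfolding eq sign_space_def by (rule sets_PiM_I) auto
qed

theorem lemma6p6:
  fixes \<alpha> :: "nat \<Rightarrow> real" and n :: nat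
  assumes pos: "\<And>k. k \<ge> 1 \<Longrightarrow> \<alpha> k > 0"
    and mono: "\<And>k. k \<ge> 1 \<Longrightarrow> \<alpha> (Suc k) \<le> \<alpha> k"
    and summ: "summable (\<lambda>k. \<alpha> (Suc k))"
    and dom: "\<And>k. k \<ge> 1 \<Longrightarrow> \<alpha> k > tail_sum \<alpha> k"
  shows "(\<forall>I::real set. is_interval I \<and> bounded I \<and> diameter I < tail_sum \<alpha> n
            \<longrightarrow> measure (sign_series_law \<alpha>) I \<le> (1/2) ^ n)
       \<and> (\<forall>\<delta>>0. tail_sum \<alpha> n < \<delta> / 4 \<longrightarrow>
            (\<forall>x\<in>measure_support (sign_series_law \<alpha>).
               measure (sign_series_law \<alpha>) {x - \<delta> <..< x + \<delta>} \<ge> (1/2) ^ n))"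
proof -
  interpret seqA \<alpha> using pos summ dom by unfold_locales
  interpret P: prob_space sign_space by (rule ps)
  define Sf where "Sf = (\<lambda>\<epsilon>. \<Sum>j. \<epsilon> (Suc j) * \<alpha> (Suc j))"
  have Sf_eq: "Sf e = Ssum \<alpha> e" for e unfolding Sf_def Ssum_def by simp
  have meas: "Sf \<in> borel_measurable sign_space" unfolding Sf_def by (rule S_meas)
  have rho: "sign_series_law \<alpha> = distr sign_space borel Sf"
    unfolding sign_series_law_def Sf_def by simp
  interpret R: prob_space "sign_series_law \<alpha>" unfolding rho
    by (rule P.prob_space_distr[OF meas])
  have AEv: "AE x in sign_space. valid x" using AE_valid unfolding valid_def .
  have part1: "measure (sign_series_law \<alpha>) I \<le> (1/2) ^ n"
    if "is_interval I" "bounded I" "diameter I < tail_sum \<alpha> n" for I :: "real set"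
  proof (cases "I \<in> sets borel")
    case False
    then have "measure (sign_series_law \<alpha>) I = 0" unfolding rho
      by (intro measure_notin_sets) simp
    then show ?thesis by simp
  next
    case True
    have hI: "\<forall>x\<in>I. \<forall>y\<in>I. \<bar>x - y\<bar> < tail_sum \<alpha> n"
      using diameter_bounded_bound[OF that(2)] that(3) by (fastforce simp: dist_real_def)
    have m: "measure (sign_series_law \<alpha>) I = measure sign_space (Sf -` I \<inter> space sign_space)"
      unfolding rho by (rule measure_distr[OF meas True])
    have "emeasure sign_space (Sf -` I \<inter> space sign_space) \<le> ennreal ((1/2)^n)"
      using cover[OF hI]
    proof
      assume "\<exists>e0. valid e0 \<and> (\<forall>e. valid e \<and> Ssum \<alpha> e \<in> I \<longrightarrow> (\<forall>j\<in>{1..n}. e j = e0 j))"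
      then obtain e0 where e0: "valid e0" "\<forall>e. valid e \<and> Ssum \<alpha> e \<in> I \<longrightarrow> (\<forall>j\<in>{1..n}. e j = e0 j)"
        by blast
      have "AE x in sign_space. x \<in> Sf -` I \<inter> space sign_space \<longrightarrow> x \<in> {x. \<forall>j\<in>{1..n}. x j = e0 j}"
        using AEv by eventually_elim (use e0 Sf_eq in auto)
      then have "emeasure sign_space (Sf -` I \<inter> space sign_space) \<le> emeasure sign_space {x. \<forall>j\<in>{1..n}. x j = e0 j}"
        by (rule emeasure_mono_AE) (rule cyl_sets)
      also have "\<dots> = ennreal ((1/2)^n)" using e0(1) unfolding valid_def by (rule cyl_emeasure)
      finally show ?thesis .
    next
      assume "\<exists>e1 e2. valid e1 \<and> valid e2 \<and> (\<forall>e. valid e \<and> Ssum \<alpha> e \<in> I \<longrightarrow>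
        (\<forall>j\<in>{1..Suc n}. e j = e1 j) \<or> (\<forall>j\<in>{1..Suc n}. e j = e2 j))"
      then obtain e1 e2 where e: "valid e1" "valid e2" "\<forall>e. valid e \<and> Ssum \<alpha> e \<in> I \<longrightarrow>
        (\<forall>j\<in>{1..Suc n}. e j = e1 j) \<or> (\<forall>j\<in>{1..Suc n}. e j = e2 j)" by blast
      let ?C1 = "{x. \<forall>j\<in>{1..Suc n}. x j = e1 j}" and ?C2 = "{x. \<forall>j\<in>{1..Suc n}. x j = e2 j}"
      have "AE x in sign_space. x \<in> Sf -` I \<inter> space sign_space \<longrightarrow> x \<in> ?C1 \<union> ?C2"
        using AEv by eventually_elim (use e Sf_eq in auto)
      then have "emeasure sign_space (Sf -` I \<inter> space sign_space) \<le> emeasure sign_space (?C1 \<union> ?C2)"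
        by (rule emeasure_mono_AE) (intro sets.Un cyl_sets)
      also have "\<dots> \<le> emeasure sign_space ?C1 + emeasure sign_space ?C2"
        by (intro emeasure_subadditive cyl_sets)
      also have "\<dots> = ennreal ((1/2)^Suc n) + ennreal ((1/2)^Suc n)"
        using cyl_emeasure[of e1 "Suc n"] cyl_emeasure[of e2 "Suc n"] e(1,2) unfolding valid_def
        by presburger
      also have "\<dots> = ennreal ((1/2)^n)"
        by (subst ennreal_plus[symmetric]) auto
      finally show ?thesis .
    qed
    then show ?thesis unfolding m by (rule emeas_to_meas) simp
  qed
  have part2: "measure (sign_series_law \<alpha>) {x - \<delta> <..< x + \<delta>} \<ge> (1/2) ^ n"
    if d: "\<delta> > 0" "tail_sum \<alpha> n < \<delta> / 4" and x: "x \<in> measure_support (sign_series_law \<alpha>)" for \<delta> x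
  proof -
    let ?U = "{x - \<delta>/2 <..< x + \<delta>/2}" and ?W = "{x - \<delta> <..< x + \<delta>}"
    have "emeasure (sign_series_law \<alpha>) ?U > 0"
      using x d unfolding measure_support_def by auto
    also have "emeasure (sign_series_law \<alpha>) ?U = emeasure sign_space (Sf -` ?U \<inter> space sign_space)"
      unfolding rho by (rule emeasure_distr[OF meas]) simp
    finally have pos_U: "emeasure sign_space (Sf -` ?U \<inter> space sign_space) > 0" .
    have "\<exists>e0. valid e0 \<and> Sf e0 \<in> ?U"
    proof (rule ccontr)
      assume na: "\<not> ?thesis"
      have "AE y in sign_space. y \<in> Sf -` ?U \<inter> space sign_space \<longrightarrow> y \<in> {}"
        using AEv by eventually_elim (use na in auto)
      then have "emeasure sign_space (Sf -` ?U \<inter> space sign_space) \<le> emeasure sign_space {}"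
        by (rule emeasure_mono_AE) simp
      then show False using pos_U by simp
    qed
    then obtain e0 where e0: "valid e0" "Sf e0 \<in> ?U" by blast
    have "AE y in sign_space. y \<in> {y. \<forall>j\<in>{1..n}. y j = e0 j} \<longrightarrow> y \<in> Sf -` ?W \<inter> space sign_space"
      using AEv
    proof eventually_elim
      case (elim y)
      show ?case
      proof
        assume "y \<in> {y. \<forall>j\<in>{1..n}. y j = e0 j}"
        then have "\<bar>Sf y - Sf e0\<bar> \<le> 2 * tail_sum \<alpha> n"
          unfolding Sf_eq using close_S[OF elim e0(1)] by auto
        then show "y \<in> Sf -` ?W \<inter> space sign_space" using e0(2) d by (auto simp: space_ss)
      qed
    qed
    then have "emeasure sign_space {y. \<forall>j\<in>{1..n}. y j = e0 j} \<le> emeasure sign_space (Sf -` ?W \<inter> space sign_space)"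
      by (rule emeasure_mono_AE) (rule measurable_sets[OF meas], simp)
    also have "\<dots> = emeasure (sign_series_law \<alpha>) ?W"
      unfolding rho by (rule emeasure_distr[OF meas, symmetric]) simp
    also have "\<dots> = ennreal (measure (sign_series_law \<alpha>) ?W)" by (rule R.emeasure_eq_measure)
    finally have "ennreal ((1/2)^n) \<le> ennreal (measure (sign_series_law \<alpha>) ?W)"
      using cyl_emeasure[of e0 n] e0(1) unfolding valid_def by simp
    then show ?thesis by (simp add: ennreal_le_iff)
  qed
  show ?thesis using part1 part2 by blast
qed

end
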